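(* If every map in $(\mathbb{X}, \dagger)$ admits a \textbf{[MP.1,3]}-inverse, then for every object $X \in \mathbb{X}$, $\mathfrak{G}\left[ (\mathbb{X}, \dagger) \right]_X$ is a Markov category with conditionals.
   Context: Let $(\mathbb{X}, \dagger)$ be a dagger additive category (a dagger category enriched in abelian groups with additive dagger and finite biproducts satisfying $\pi_j^\dagger = \iota_j$). A [MP.1,3]-inverse of $f: A \to B$ is a map $f^\bullet: B \to A$ with $f \circ f^\bullet \circ f = f$ and $(f \circ f^\bullet)^\dagger = f \circ f^\bullet$. A map $p$ is $\dagger$-positive if $p = \phi^\dagger \circ \phi$ for some $\phi$. For an object $X$, the Gauss construction $\mathfrak{G}\left[ (\mathbb{X}, \dagger) \right]_X$ is the Markov category with the objects of $\mathbb{X}$, maps $A \to B$ the triples $(f,p,x)$ with $f: A \to B$, $p: B \to B$ $\dagger$-positive, $x: X \to B$; identities $\mathsf{Id}_A = (\mathsf{id}_A,0,0)$; composition $(g,q,y) \circ (f,p,x) = (g \circ f, q + g \circ p \circ g^\dagger, y + g \circ x)$; $A \otimes B = A \oplus B$, $(f,p,x) \otimes (g,q,y) = \left(f \oplus g, p \oplus q, \begin{bmatrix} x \\ y \end{bmatrix}\right)$; copy $\left(\begin{bmatrix} \mathsf{id}_A \\ \mathsf{id}_A \end{bmatrix}, 0, 0\right)$, delete $(0,0,0): A \to \mathsf{0}$. A Markov category has conditionals if every map $F: A \to B \otimes C$ has a map $G: B \otimes A \to C$ with $(\mathsf{Id}_B \otimes G) \circ (\mathsf{copy}_B \otimes \mathsf{Id}_A)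 \circ (\mathsf{Id}_B \otimes \mathsf{del}_C \otimes \mathsf{Id}_A) \circ (F \otimes \mathsf{Id}_A) \circ \mathsf{copy}_A = F$. *)

theory Defs
  imports Main
begin

section \<open>Dagger additive categories (morphisms untyped, hom-sets as predicates)\<close>

record ('o,'m) dac =
  dHom  :: "'o \<Rightarrow> 'o \<Rightarrow> 'm set"
  dCmp  :: "'m \<Rightarrow> 'm \<Rightarrow> 'm"   (* dCmp D g f = g o f *)
  dId   :: "'o \<Rightarrow> 'm"
  dDag  :: "'m \<Rightarrow> 'm"
  dAdd  :: "'m \<Rightarrow> 'm \<Rightarrow> 'm"
  dNeg  :: "'m \<Rightarrow> 'm"
  dZero :: "'o \<Rightarrow> 'o \<Rightarrow> 'm"
  dBip  :: "'o \<Rightarrow> 'o \<Rightarrow> 'o"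
  dP1   :: "'o \<Rightarrow> 'o \<Rightarrow> 'm"
  dP2   :: "'o \<Rightarrow> 'o \<Rightarrow> 'm"
  dI1   :: "'o \<Rightarrow> 'o \<Rightarrow> 'm"
  dI2   :: "'o \<Rightarrow> 'o \<Rightarrow> 'm"
  dZob  :: 'o

locale dagger_additive_category =
  fixes D :: "('o,'m) dac"
  assumes comp_hom: "f \<in> dHom D A B \<Longrightarrow> g \<in> dHom D B C \<Longrightarrow> dCmp D g f \<in> dHom D A C"
    and id_hom: "dId D A \<in> dHom D A A"
    and comp_id_left: "f \<in> dHom D A B \<Longrightarrow> dCmp D (dId D B) f = f"
    and comp_id_right: "f \<in> dHom D A B \<Longrightarrow> dCmp D f (dId D A) = f"
    and comp_assoc: "f \<in> dHom D A B \<Longrightarrow> g \<in> dHom D B C \<Longrightarrow> h \<in> dHom D C E \<Longrightarrow>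
                      dCmp D h (dCmp D g f) = dCmp D (dCmp D h g) f"
    and zero_hom: "dZero D A B \<in> dHom D A B"
    and add_hom: "f \<in> dHom D A B \<Longrightarrow> g \<in> dHom D A B \<Longrightarrow> dAdd D f g \<in> dHom D A B"
    and neg_hom: "f \<in> dHom D A B \<Longrightarrow> dNeg D f \<in> dHom D A B"
    and add_assoc: "f \<in> dHom D A B \<Longrightarrow> g \<in> dHom D A B \<Longrightarrow> h \<in> dHom D A B \<Longrightarrow>
                     dAdd D (dAdd D f g) h = dAdd D f (dAdd D g h)"
    and add_comm: "f \<in> dHom D A B \<Longrightarrow> g \<in> dHom D A B \<Longrightarrow> dAdd D f g = dAdd D g f"
    and add_zero: "f \<in> dHom D A B \<Longrightarrow> dAdd D f (dZero D A B) = f"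
    and add_neg: "f \<in> dHom D A B \<Longrightarrow> dAdd D f (dNeg D f) = dZero D A B"
    and comp_add_left: "f \<in> dHom D A B \<Longrightarrow> g \<in> dHom D A B \<Longrightarrow> h \<in> dHom D B C \<Longrightarrow>
                         dCmp D h (dAdd D f g) = dAdd D (dCmp D h f) (dCmp D h g)"
    and comp_add_right: "f \<in> dHom D A B \<Longrightarrow> g \<in> dHom D B C \<Longrightarrow> h \<in> dHom D B C \<Longrightarrow>
                         dCmp D (dAdd D g h) f = dAdd D (dCmp D g f) (dCmp D h f)"
    and dag_hom: "f \<in> dHom D A B \<Longrightarrow> dDag D f \<in> dHom D B A"
    and dag_dag: "f \<in> dHom D A B \<Longrightarrow> dDag D (dDag D f) = f"
    and dag_comp: "f \<in> dHom D A B \<Longrightarrow> g \<in> dHom D B C \<Longrightarrow>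
                    dDag D (dCmp D g f) = dCmp D (dDag D f) (dDag D g)"
    and dag_id: "dDag D (dId D A) = dId D A"
    and dag_add: "f \<in> dHom D A B \<Longrightarrow> g \<in> dHom D A B \<Longrightarrow>
                    dDag D (dAdd D f g) = dAdd D (dDag D f) (dDag D g)"
    and zero_obj_to: "dHom D A (dZob D) = {dZero D A (dZob D)}"
    and zero_obj_from: "dHom D (dZob D) A = {dZero D (dZob D) A}"
    and p1_hom: "dP1 D A B \<in> dHom D (dBip D A B) A"
    and p2_hom: "dP2 D A B \<in> dHom D (dBip D A B) B"
    and i1_hom: "dI1 D A B \<in> dHom D A (dBip D A B)"
    and i2_hom: "dI2 D A B \<in> dHom D B (dBip D A B)"
    and p1_i1: "dCmp D (dP1 D A B) (dI1 D A B) = dId D A"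
    and p2_i2: "dCmp D (dP2 D A B) (dI2 D A B) = dId D B"
    and p1_i2: "dCmp D (dP1 D A B) (dI2 D A B) = dZero D B A"
    and p2_i1: "dCmp D (dP2 D A B) (dI1 D A B) = dZero D A B"
    and bip_sum: "dAdd D (dCmp D (dI1 D A B) (dP1 D A B)) (dCmp D (dI2 D A B) (dP2 D A B))
                    = dId D (dBip D A B)"
    and dag_p1: "dDag D (dP1 D A B) = dI1 D A B"
    and dag_p2: "dDag D (dP2 D A B) = dI2 D A B"

definition mp13_inverse :: "('o,'m) dac \<Rightarrow> 'o \<Rightarrow> 'o \<Rightarrow> 'm \<Rightarrow> 'm \<Rightarrow> bool" where
  "mp13_inverse D A B f g \<longleftrightarrow>
     g \<in> dHom D B A \<and> dCmp D f (dCmp D g f) = f \<and> dDag D (dCmp D f g) = dCmp D f g"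

definition dag_positive :: "('o,'m) dac \<Rightarrow> 'o \<Rightarrow> 'm \<Rightarrow> bool" where
  "dag_positive D B p \<longleftrightarrow>
     p \<in> dHom D B B \<and> (\<exists>C \<phi>. \<phi> \<in> dHom D B C \<and> p = dCmp D (dDag D \<phi>) \<phi>)"

definition dsum :: "('o,'m) dac \<Rightarrow> 'o \<Rightarrow> 'o \<Rightarrow> 'o \<Rightarrow> 'o \<Rightarrow> 'm \<Rightarrow> 'm \<Rightarrow> 'm" where
  "dsum D A C B E f g =
     dAdd D (dCmp D (dI1 D B E) (dCmp D f (dP1 D A C)))
            (dCmp D (dI2 D B E) (dCmp D g (dP2 D A C)))"

definition dpair :: "('o,'m) dac \<Rightarrow> 'o \<Rightarrow> 'o \<Rightarrow> 'm \<Rightarrow> 'm \<Rightarrow> 'm" where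
  "dpair D B E x y = dAdd D (dCmp D (dI1 D B E) x) (dCmp D (dI2 D B E) y)"

section \<open>Markov categories (morphisms carry domain and codomain)\<close>

record ('o,'n) mcat =
  mHom   :: "'o \<Rightarrow> 'o \<Rightarrow> 'n set"
  mCmp   :: "'n \<Rightarrow> 'n \<Rightarrow> 'n"          (* mCmp M g f = g o f *)
  mId    :: "'o \<Rightarrow> 'n"
  mTen   :: "'o \<Rightarrow> 'o \<Rightarrow> 'o"
  mTenM  :: "'n \<Rightarrow> 'n \<Rightarrow> 'n"
  mUnit  :: 'o
  mAssoc :: "'o \<Rightarrow> 'o \<Rightarrow> 'o \<Rightarrow> 'n"
  mLu    :: "'o \<Rightarrow> 'n"
  mRu    :: "'o \<Rightarrow> 'n"
  mSym   :: "'o \<Rightarrow> 'o \<Rightarrow> 'n"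
  mCopy  :: "'o \<Rightarrow> 'n"
  mDel   :: "'o \<Rightarrow> 'n"

definition m_is_iso :: "('o,'n) mcat \<Rightarrow> 'o \<Rightarrow> 'o \<Rightarrow> 'n \<Rightarrow> bool" where
  "m_is_iso M A B f \<longleftrightarrow> f \<in> mHom M A B \<and>
     (\<exists>g \<in> mHom M B A. mCmp M g f = mId M A \<and> mCmp M f g = mId M B)"

definition m_inv :: "('o,'n) mcat \<Rightarrow> 'o \<Rightarrow> 'o \<Rightarrow> 'n \<Rightarrow> 'n" where
  "m_inv M A B f = (SOME g. g \<in> mHom M B A \<and> mCmp M g f = mId M A \<and> mCmp M f g = mId M B)"

text \<open>middle-four interchange (A*A)*(B*B) -> (A*B)*(A*B)\<close>
definition m_mid :: "('o,'n) mcat \<Rightarrow> 'o \<Rightarrow> 'o \<Rightarrow> 'n" where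
  "m_mid M A B =
    mCmp M (m_inv M (mTen M (mTen M A B) (mTen M A B)) (mTen M A (mTen M B (mTen M A B)))
                   (mAssoc M A B (mTen M A B)))
    (mCmp M (mTenM M (mId M A) (mAssoc M B A B))
    (mCmp M (mTenM M (mId M A) (mTenM M (mSym M A B) (mId M B)))
    (mCmp M (mTenM M (mId M A) (m_inv M (mTen M (mTen M A B) B) (mTen M A (mTen M B B))
                                      (mAssoc M A B B)))
            (mAssoc M A A (mTen M B B)))))"

locale markov_category =
  fixes M :: "('o,'n) mcat"
  assumes comp_hom: "f \<in> mHom M A B \<Longrightarrow> g \<in> mHom M B C \<Longrightarrow> mCmp M g f \<in> mHom M A C"
    and id_hom: "mId M A \<in> mHom M A A"
    and comp_id_left: "f \<in> mHom M A B \<Longrightarrow> mCmp M (mId M B) f = f"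
    and comp_id_right: "f \<in> mHom M A B \<Longrightarrow> mCmp M f (mId M A) = f"
    and comp_assoc: "f \<in> mHom M A B \<Longrightarrow> g \<in> mHom M B C \<Longrightarrow> h \<in> mHom M C E \<Longrightarrow>
                      mCmp M h (mCmp M g f) = mCmp M (mCmp M h g) f"
    and tens_hom: "f \<in> mHom M A B \<Longrightarrow> g \<in> mHom M C E \<Longrightarrow>
                    mTenM M f g \<in> mHom M (mTen M A C) (mTen M B E)"
    and tens_id: "mTenM M (mId M A) (mId M B) = mId M (mTen M A B)"
    and tens_comp: "f \<in> mHom M A B \<Longrightarrow> f' \<in> mHom M B C \<Longrightarrow> g \<in> mHom M A' B' \<Longrightarrow> g' \<in> mHom M B' C' \<Longrightarrow>
                     mTenM M (mCmp M f' f) (mCmp M g' g) = mCmp M (mTenM M f' g') (mTenM M f g)"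
    and assoc_iso: "m_is_iso M (mTen M (mTen M A B) C) (mTen M A (mTen M B C)) (mAssoc M A B C)"
    and assoc_nat: "f \<in> mHom M A A' \<Longrightarrow> g \<in> mHom M B B' \<Longrightarrow> h \<in> mHom M C C' \<Longrightarrow>
                     mCmp M (mAssoc M A' B' C') (mTenM M (mTenM M f g) h)
                       = mCmp M (mTenM M f (mTenM M g h)) (mAssoc M A B C)"
    and lu_iso: "m_is_iso M (mTen M (mUnit M) A) A (mLu M A)"
    and lu_nat: "f \<in> mHom M A B \<Longrightarrow> mCmp M f (mLu M A) = mCmp M (mLu M B) (mTenM M (mId M (mUnit M)) f)"
    and ru_iso: "m_is_iso M (mTen M A (mUnit M)) A (mRu M A)"
    and ru_nat: "f \<in> mHom M A B \<Longrightarrow> mCmp M f (mRu M A) = mCmp M (mRu M B) (mTenM M f (mId M (mUnit M)))"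
    and pentagon: "mCmp M (mAssoc M A B (mTen M C E)) (mAssoc M (mTen M A B) C E)
         = mCmp M (mTenM M (mId M A) (mAssoc M B C E))
             (mCmp M (mAssoc M A (mTen M B C) E) (mTenM M (mAssoc M A B C) (mId M E)))"
    and triangle: "mCmp M (mTenM M (mId M A) (mLu M B)) (mAssoc M A (mUnit M) B)
                     = mTenM M (mRu M A) (mId M B)"
    and sym_hom: "mSym M A B \<in> mHom M (mTen M A B) (mTen M B A)"
    and sym_nat: "f \<in> mHom M A A' \<Longrightarrow> g \<in> mHom M B B' \<Longrightarrow>
                    mCmp M (mSym M A' B') (mTenM M f g) = mCmp M (mTenM M g f) (mSym M A B)"
    and sym_sym: "mCmp M (mSym M B A) (mSym M A B) = mId M (mTen M A B)"
    and hexagon: "mCmp M (mAssoc M B C A) (mCmp M (mSym M A (mTen M B C)) (mAssoc M A B C))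
         = mCmp M (mTenM M (mId M B) (mSym M A C))
             (mCmp M (mAssoc M B A C) (mTenM M (mSym M A B) (mId M C)))"
    and copy_hom: "mCopy M A \<in> mHom M A (mTen M A A)"
    and del_hom: "mDel M A \<in> mHom M A (mUnit M)"
    and counit_left: "mCmp M (mLu M A) (mCmp M (mTenM M (mDel M A) (mId M A)) (mCopy M A)) = mId M A"
    and counit_right: "mCmp M (mRu M A) (mCmp M (mTenM M (mId M A) (mDel M A)) (mCopy M A)) = mId M A"
    and coassoc: "mCmp M (mAssoc M A A A) (mCmp M (mTenM M (mCopy M A) (mId M A)) (mCopy M A))
                    = mCmp M (mTenM M (mId M A) (mCopy M A)) (mCopy M A)"
    and cocomm: "mCmp M (mSym M A A) (mCopy M A) = mCopy M A"
    and copy_tensor: "mCopy M (mTen M A B) = mCmp M (m_mid M A B) (mTenM M (mCopy M A) (mCopy M B))"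
    and del_tensor: "mDel M (mTen M A B) = mCmp M (mLu M (mUnit M)) (mTenM M (mDel M A) (mDel M B))"
    and copy_unit: "mCopy M (mUnit M) = m_inv M (mTen M (mUnit M) (mUnit M)) (mUnit M) (mLu M (mUnit M))"
    and del_unit: "mDel M (mUnit M) = mId M (mUnit M)"
    and del_nat: "f \<in> mHom M A B \<Longrightarrow> mCmp M (mDel M B) f = mDel M A"

definition has_conditionals :: "('o,'n) mcat \<Rightarrow> bool" where
  "has_conditionals M \<longleftrightarrow>
    (\<forall>A B C F. F \<in> mHom M A (mTen M B C) \<longrightarrow>
      (\<exists>G \<in> mHom M (mTen M B A) C.
         mCmp M (mTenM M (mId M B) G)
          (mCmp M (mAssoc M B B A)
          (mCmp M (mTenM M (mCopy M B) (mId M A))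
          (mCmp M (mTenM M (mCmp M (mRu M B) (mTenM M (mId M B) (mDel M C))) (mId M A))
          (mCmp M (mTenM M F (mId M A)) (mCopy M A))))) = F))"

section \<open>The Gauss construction\<close>

type_synonym ('o,'m) gmor = "'o \<times> 'o \<times> 'm \<times> 'm \<times> 'm"  (* (dom, cod, f, p, x) *)

definition gauss :: "('o,'m) dac \<Rightarrow> 'o \<Rightarrow> ('o, ('o,'m) gmor) mcat" where
  "gauss D X =
   \<lparr> mHom = (\<lambda>A B. {(A', B', f, p, x). A' = A \<and> B' = B \<and> f \<in> dHom D A B
                        \<and> dag_positive D B p \<and> x \<in> dHom D X B}),
     mCmp = (\<lambda>(B', C, g, q, y) (A, B, f, p, x).
               (A, C, dCmp D g f, dAdd D q (dCmp D g (dCmp D p (dDag D g))), dAdd D y (dCmp D g x))),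
     mId = (\<lambda>A. (A, A, dId D A, dZero D A A, dZero D X A)),
     mTen = dBip D,
     mTenM = (\<lambda>(A, B, f, p, x) (C, E, g, q, y).
               (dBip D A C, dBip D B E, dsum D A C B E f g, dsum D B E B E p q, dpair D B E x y)),
     mUnit = dZob D,
     mAssoc = (\<lambda>A B C. (dBip D (dBip D A B) C, dBip D A (dBip D B C),
        dAdd D (dCmp D (dI1 D A (dBip D B C)) (dCmp D (dP1 D A B) (dP1 D (dBip D A B) C)))
               (dCmp D (dI2 D A (dBip D B C))
                  (dAdd D (dCmp D (dI1 D B C) (dCmp D (dP2 D A B) (dP1 D (dBip D A B) C)))
                          (dCmp D (dI2 D B C) (dP2 D (dBip D A B) C)))),
        dZero D (dBip D A (dBip D B C)) (dBip D A (dBip D B C)),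
        dZero D X (dBip D A (dBip D B C)))),
     mLu = (\<lambda>A. (dBip D (dZob D) A, A, dP2 D (dZob D) A, dZero D A A, dZero D X A)),
     mRu = (\<lambda>A. (dBip D A (dZob D), A, dP1 D A (dZob D), dZero D A A, dZero D X A)),
     mSym = (\<lambda>A B. (dBip D A B, dBip D B A,
        dAdd D (dCmp D (dI2 D B A) (dP1 D A B)) (dCmp D (dI1 D B A) (dP2 D A B)),
        dZero D (dBip D B A) (dBip D B A), dZero D X (dBip D B A))),
     mCopy = (\<lambda>A. (A, dBip D A A, dpair D A A (dId D A) (dId D A),
        dZero D (dBip D A A) (dBip D A A), dZero D X (dBip D A A))),
     mDel = (\<lambda>A. (A, dZob D, dZero D A (dZob D), dZero D (dZob D) (dZob D), dZero D X (dZob D))) \<rparr>"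

end

theory Submission
  imports Defs
begin

context dagger_additive_category begin

definition "tc A B C g f = dCmp D g f"
definition "ta A B f g = dAdd D f g"
definition "tn A B f = dNeg D f"
definition "tdg A B f = dDag D f"

abbreviation "H \<equiv> dHom D"
abbreviation "Bp \<equiv> dBip D"

lemma tc_hom[simp]: "f \<in> H A B \<Longrightarrow> g \<in> H B C \<Longrightarrow> tc A B C g f \<in> H A C"
  by (simp add: tc_def comp_hom)
lemma ta_hom[simp]: "f \<in> H A B \<Longrightarrow> g \<in> H A B \<Longrightarrow> ta A B f g \<in> H A B"
  by (simp add: ta_def add_hom)
lemma tn_hom[simp]: "f \<in> H A B \<Longrightarrow> tn A B f \<in> H A B"
  by (simp add: tn_def neg_hom)
lemma tdg_hom[simp]: "f \<in> H A B \<Longrightarrow> tdg A B f \<in> H B A"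
  by (simp add: tdg_def dag_hom)
lemmas base_hom[simp] = id_hom zero_hom p1_hom p2_hom i1_hom i2_hom

lemma tc_assoc[simp]: "f \<in> H A B \<Longrightarrow> g \<in> H B C \<Longrightarrow> h \<in> H C E \<Longrightarrow>
   tc A B E (tc B C E h g) f = tc A C E h (tc A B C g f)"
  by (simp add: tc_def comp_assoc)
lemma tc_idl[simp]: "f \<in> H A B \<Longrightarrow> tc A B B (dId D B) f = f"
  by (simp add: tc_def comp_id_left)
lemma tc_idr[simp]: "f \<in> H A B \<Longrightarrow> tc A A B f (dId D A) = f"
  by (simp add: tc_def comp_id_right)

lemma ta_zero[simp]: "f \<in> H A B \<Longrightarrow> ta A B f (dZero D A B) = f"
  by (simp add: ta_def add_zero)
lemma ta_zero2[simp]: "f \<in> H A B \<Longrightarrow> ta A B (dZero D A B) f = f"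
  by (metis ta_def add_zero add_comm zero_hom)
lemma ta_comm: "f \<in> H A B \<Longrightarrow> g \<in> H A B \<Longrightarrow> ta A B f g = ta A B g f"
  by (simp add: ta_def add_comm)
lemma ta_assoc: "f \<in> H A B \<Longrightarrow> g \<in> H A B \<Longrightarrow> h \<in> H A B \<Longrightarrow> ta A B (ta A B f g) h = ta A B f (ta A B g h)"
  by (simp add: ta_def add_assoc)
lemma ta_lcomm: "f \<in> H A B \<Longrightarrow> g \<in> H A B \<Longrightarrow> h \<in> H A B \<Longrightarrow> ta A B f (ta A B g h) = ta A B g (ta A B f h)"
  by (metis ta_assoc ta_comm)
lemmas ta_ac = ta_assoc ta_comm ta_lcomm

lemma tc_addl[simp]: "f \<in> H A B \<Longrightarrow> g \<in> H A B \<Longrightarrow> h \<in> H B C \<Longrightarrow>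
   tc A B C h (ta A B f g) = ta A C (tc A B C h f) (tc A B C h g)"
  by (simp add: tc_def ta_def comp_add_left)
lemma tc_addr[simp]: "f \<in> H A B \<Longrightarrow> g \<in> H B C \<Longrightarrow> h \<in> H B C \<Longrightarrow>
   tc A B C (ta B C g h) f = ta A C (tc A B C g f) (tc A B C h f)"
  by (simp add: tc_def ta_def comp_add_right)

lemma idem_zero: "u \<in> H A C \<Longrightarrow> u = ta A C u u \<Longrightarrow> u = dZero D A C"
proof -
  assume uh: "u \<in> H A C" and e: "u = ta A C u u"
  have "dZero D A C = dAdd D u (dNeg D u)" using add_neg uh by simp
  also have "\<dots> = dAdd D (dAdd D u u) (dNeg D u)" using e by (simp add: ta_def)
  also have "\<dots> = u" using uh add_assoc add_neg add_zero neg_hom by simp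
  finally show ?thesis by simp
qed
lemma tc_zr[simp]: "g \<in> H B C \<Longrightarrow> tc A B C g (dZero D A B) = dZero D A C"
  by (rule idem_zero) (simp, metis tc_addl ta_zero zero_hom)
lemma tc_zl[simp]: "f \<in> H A B \<Longrightarrow> tc A B C (dZero D B C) f = dZero D A C"
  by (rule idem_zero) (simp, metis tc_addr ta_zero zero_hom)

lemma p1i1[simp]: "tc A (Bp A B) A (dP1 D A B) (dI1 D A B) = dId D A" by (simp add: tc_def p1_i1)
lemma p2i2[simp]: "tc B (Bp A B) B (dP2 D A B) (dI2 D A B) = dId D B" by (simp add: tc_def p2_i2)
lemma p1i2[simp]: "tc B (Bp A B) A (dP1 D A B) (dI2 D A B) = dZero D B A" by (simp add: tc_def p1_i2)
lemma p2i1[simp]: "tc A (Bp A B) B (dP2 D A B) (dI1 D A B) = dZero D A B" by (simp add: tc_def p2_i1)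
lemma p1i1f[simp]: "f \<in> H Z A \<Longrightarrow> tc Z (Bp A B) A (dP1 D A B) (tc Z A (Bp A B) (dI1 D A B) f) = f"
  by (metis p1i1 tc_assoc tc_idl base_hom)
lemma p2i2f[simp]: "f \<in> H Z B \<Longrightarrow> tc Z (Bp A B) B (dP2 D A B) (tc Z B (Bp A B) (dI2 D A B) f) = f"
  by (metis p2i2 tc_assoc tc_idl base_hom)
lemma p1i2f[simp]: "f \<in> H Z B \<Longrightarrow> tc Z (Bp A B) A (dP1 D A B) (tc Z B (Bp A B) (dI2 D A B) f) = dZero D Z A"
  by (metis p1i2 tc_assoc tc_zl base_hom)
lemma p2i1f[simp]: "f \<in> H Z A \<Longrightarrow> tc Z (Bp A B) B (dP2 D A B) (tc Z A (Bp A B) (dI1 D A B) f) = dZero D Z B"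
  by (metis p2i1 tc_assoc tc_zl base_hom)

lemma tdg_tdg[simp]: "f \<in> H A B \<Longrightarrow> tdg B A (tdg A B f) = f" by (simp add: tdg_def dag_dag)
lemma tdg_tc[simp]: "f \<in> H A B \<Longrightarrow> g \<in> H B C \<Longrightarrow> tdg A C (tc A B C g f) = tc C B A (tdg A B f) (tdg B C g)"
  by (simp add: tdg_def tc_def dag_comp)
lemma tdg_ta[simp]: "f \<in> H A B \<Longrightarrow> g \<in> H A B \<Longrightarrow> tdg A B (ta A B f g) = ta B A (tdg A B f) (tdg A B g)"
  by (simp add: tdg_def ta_def dag_add)
lemma tdg_id[simp]: "tdg A A (dId D A) = dId D A" by (simp add: tdg_def dag_id)
lemma tdg_p1[simp]: "tdg (Bp A B) A (dP1 D A B) = dI1 D A B" by (simp add: tdg_def dag_p1)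
lemma tdg_p2[simp]: "tdg (Bp A B) B (dP2 D A B) = dI2 D A B" by (simp add: tdg_def dag_p2)
lemma tdg_i1[simp]: "tdg A (Bp A B) (dI1 D A B) = dP1 D A B" by (metis tdg_def dag_p1 dag_dag p1_hom)
lemma tdg_i2[simp]: "tdg B (Bp A B) (dI2 D A B) = dP2 D A B" by (metis tdg_def dag_p2 dag_dag p2_hom)
lemma tdg_zero[simp]: "tdg A B (dZero D A B) = dZero D B A"
  by (rule idem_zero) (simp, metis tdg_ta ta_zero zero_hom)

end

context dagger_additive_category begin

definition "teq A B u v \<longleftrightarrow> u \<in> H A B \<and> v \<in> H A B \<and> u = v"

lemma bip_sum_t: "ta (Bp A B) (Bp A B) (tc (Bp A B) A (Bp A B) (dI1 D A B) (dP1 D A B))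
   (tc (Bp A B) B (Bp A B) (dI2 D A B) (dP2 D A B)) = dId D (Bp A B)"
  by (simp add: ta_def tc_def bip_sum)

lemma ext_cod: "u \<in> H Z (Bp A B) \<Longrightarrow> v \<in> H Z (Bp A B) \<Longrightarrow>
  teq Z A (tc Z (Bp A B) A (dP1 D A B) u) (tc Z (Bp A B) A (dP1 D A B) v) \<Longrightarrow>
  teq Z B (tc Z (Bp A B) B (dP2 D A B) u) (tc Z (Bp A B) B (dP2 D A B) v) \<Longrightarrow> teq Z (Bp A B) u v"
proof -
  assume u: "u \<in> H Z (Bp A B)" and v: "v \<in> H Z (Bp A B)" and
    e1: "teq Z A (tc Z (Bp A B) A (dP1 D A B) u) (tc Z (Bp A B) A (dP1 D A B) v)" and
    e2: "teq Z B (tc Z (Bp A B) B (dP2 D A B) u) (tc Z (Bp A B) B (dP2 D A B) v)"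
  have "u = tc Z (Bp A B) (Bp A B) (dId D (Bp A B)) u" using u by simp
  also have "\<dots> = ta Z (Bp A B) (tc Z A (Bp A B) (dI1 D A B) (tc Z (Bp A B) A (dP1 D A B) u))
      (tc Z B (Bp A B) (dI2 D A B) (tc Z (Bp A B) B (dP2 D A B) u))"
    unfolding bip_sum_t[symmetric] using u by simp
  also have "\<dots> = ta Z (Bp A B) (tc Z A (Bp A B) (dI1 D A B) (tc Z (Bp A B) A (dP1 D A B) v))
      (tc Z B (Bp A B) (dI2 D A B) (tc Z (Bp A B) B (dP2 D A B) v))"
    using e1 e2 by (simp add: teq_def)
  also have "\<dots> = tc Z (Bp A B) (Bp A B) (dId D (Bp A B)) v"
    unfolding bip_sum_t[symmetric] using v by simp
  also have "\<dots> = v" using v by simp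
  finally show ?thesis using u v by (simp add: teq_def)
qed

lemma ext_dom: "u \<in> H (Bp A B) Z \<Longrightarrow> v \<in> H (Bp A B) Z \<Longrightarrow>
  teq A Z (tc A (Bp A B) Z u (dI1 D A B)) (tc A (Bp A B) Z v (dI1 D A B)) \<Longrightarrow>
  teq B Z (tc B (Bp A B) Z u (dI2 D A B)) (tc B (Bp A B) Z v (dI2 D A B)) \<Longrightarrow> teq (Bp A B) Z u v"
proof -
  assume u: "u \<in> H (Bp A B) Z" and v: "v \<in> H (Bp A B) Z" and
    e1: "teq A Z (tc A (Bp A B) Z u (dI1 D A B)) (tc A (Bp A B) Z v (dI1 D A B))" and
    e2: "teq B Z (tc B (Bp A B) Z u (dI2 D A B)) (tc B (Bp A B) Z v (dI2 D A B))"
  have "u = tc (Bp A B) (Bp A B) Z u (dId D (Bp A B))" using u by simp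
  also have "\<dots> = ta (Bp A B) Z (tc (Bp A B) A Z (tc A (Bp A B) Z u (dI1 D A B)) (dP1 D A B))
      (tc (Bp A B) B Z (tc B (Bp A B) Z u (dI2 D A B)) (dP2 D A B))"
    unfolding bip_sum_t[symmetric] using u by simp
  also have "\<dots> = ta (Bp A B) Z (tc (Bp A B) A Z (tc A (Bp A B) Z v (dI1 D A B)) (dP1 D A B))
      (tc (Bp A B) B Z (tc B (Bp A B) Z v (dI2 D A B)) (dP2 D A B))"
    using e1 e2 by (simp add: teq_def)
  also have "\<dots> = tc (Bp A B) (Bp A B) Z v (dId D (Bp A B))"
    unfolding bip_sum_t[symmetric] using v by simp
  also have "\<dots> = v" using v by simp
  finally show ?thesis using u v by (simp add: teq_def)
qed

lemma dsum_t[simp]: "dsum D A C B E f g = ta (Bp A C) (Bp B E)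
   (tc (Bp A C) B (Bp B E) (dI1 D B E) (tc (Bp A C) A B f (dP1 D A C)))
   (tc (Bp A C) E (Bp B E) (dI2 D B E) (tc (Bp A C) C E g (dP2 D A C)))"
  by (simp add: dsum_def ta_def tc_def)
lemma dpair_t: "dpair D B E x y = ta X (Bp B E) (tc X B (Bp B E) (dI1 D B E) x) (tc X E (Bp B E) (dI2 D B E) y)"
  by (simp add: dpair_def ta_def tc_def)

lemma teqD: "teq A B u v \<Longrightarrow> u = v" by (simp add: teq_def)

definition "asf A B C = ta (Bp (Bp A B) C) (Bp A (Bp B C))
   (tc (Bp (Bp A B) C) A (Bp A (Bp B C)) (dI1 D A (Bp B C)) (tc (Bp (Bp A B) C) (Bp A B) A (dP1 D A B) (dP1 D (Bp A B) C)))
   (tc (Bp (Bp A B) C) (Bp B C) (Bp A (Bp B C)) (dI2 D A (Bp B C))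
      (ta (Bp (Bp A B) C) (Bp B C)
         (tc (Bp (Bp A B) C) B (Bp B C) (dI1 D B C) (tc (Bp (Bp A B) C) (Bp A B) B (dP2 D A B) (dP1 D (Bp A B) C)))
         (tc (Bp (Bp A B) C) C (Bp B C) (dI2 D B C) (dP2 D (Bp A B) C))))"

lemma asf_hom[simp]: "asf A B C \<in> H (Bp (Bp A B) C) (Bp A (Bp B C))" by (simp add: asf_def)


lemma pos_iff: "dag_positive D B p \<longleftrightarrow> p \<in> H B B \<and> (\<exists>C \<phi>. \<phi> \<in> H B C \<and> p = tc B C B (tdg B C \<phi>) \<phi>)"
  by (simp add: dag_positive_def tc_def tdg_def)
lemma pos_hom: "dag_positive D B p \<Longrightarrow> p \<in> H B B" by (simp add: pos_iff)
lemma pos_zero[simp]: "dag_positive D B (dZero D B B)"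
  unfolding pos_iff by (rule conjI, simp, rule exI[of _ B], rule exI[of _ "dZero D B B"], simp)
lemma pos_add: "dag_positive D B p \<Longrightarrow> dag_positive D B q \<Longrightarrow> dag_positive D B (ta B B p q)"
proof -
  assume "dag_positive D B p" "dag_positive D B q"
  then obtain C \<phi> C' \<psi> where f: "\<phi> \<in> H B C" "p = tc B C B (tdg B C \<phi>) \<phi>"
     and g: "\<psi> \<in> H B C'" "q = tc B C' B (tdg B C' \<psi>) \<psi>" unfolding pos_iff by auto
  define \<chi> where "\<chi> = ta B (Bp C C') (tc B C (Bp C C') (dI1 D C C') \<phi>) (tc B C' (Bp C C') (dI2 D C C') \<psi>)"
  have "\<chi> \<in> H B (Bp C C')" using f g by (simp add: \<chi>_def)
  moreover have "ta B B p q = tc B (Bp C C') B (tdg B (Bp C C') \<chi>) \<chi>" using f g by (simp add: \<chi>_def)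
  ultimately show ?thesis using f g unfolding pos_iff by auto
qed
lemma pos_conj: "dag_positive D B p \<Longrightarrow> g \<in> H B C \<Longrightarrow> dag_positive D C (tc C B C g (tc C B B p (tdg B C g)))"
proof -
  assume "dag_positive D B p" and gh: "g \<in> H B C"
  then obtain E \<phi> where f: "\<phi> \<in> H B E" "p = tc B E B (tdg B E \<phi>) \<phi>" unfolding pos_iff by auto
  define \<chi> where "\<chi> = tc C B E \<phi> (tdg B C g)"
  have "\<chi> \<in> H C E" using f gh by (simp add: \<chi>_def)
  moreover have "tc C B C g (tc C B B p (tdg B C g)) = tc C E C (tdg C E \<chi>) \<chi>" using f gh by (simp add: \<chi>_def)
  ultimately show ?thesis using f gh unfolding pos_iff by auto
qed
lemma pos_dsum: "dag_positive D B p \<Longrightarrow> dag_positive D E q \<Longrightarrow> dag_positive D (Bp B E) (dsum D B E B E p q)"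
proof -
  assume "dag_positive D B p" "dag_positive D E q"
  then obtain C \<phi> C' \<psi> where f: "\<phi> \<in> H B C" "p = tc B C B (tdg B C \<phi>) \<phi>"
     and g: "\<psi> \<in> H E C'" "q = tc E C' E (tdg E C' \<psi>) \<psi>" unfolding pos_iff by auto
  define \<chi> where "\<chi> = dsum D B E C C' \<phi> \<psi>"
  have "\<chi> \<in> H (Bp B E) (Bp C C')" using f g by (simp add: \<chi>_def)
  moreover have "dsum D B E B E p q = tc (Bp B E) (Bp C C') (Bp B E) (tdg (Bp B E) (Bp C C') \<chi>) \<chi>" using f g by (simp add: \<chi>_def)
  ultimately show ?thesis using f g unfolding pos_iff by (auto simp del: dsum_t)
qed

end

context dagger_additive_category begin

lemma neg_unique: "u \<in> H A B \<Longrightarrow> w \<in> H A B \<Longrightarrow> ta A B u w = dZero D A B \<Longrightarrow> w = tn A B u"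
proof -
  assume u: "u \<in> H A B" and w: "w \<in> H A B" and e: "ta A B u w = dZero D A B"
  have nu: "tn A B u \<in> H A B" using u by simp
  have z: "ta A B (tn A B u) u = dZero D A B" using u add_neg ta_comm nu by (simp add: ta_def tn_def)
  have "w = ta A B (ta A B (tn A B u) u) w" using z w by simp
  also have "\<dots> = ta A B (tn A B u) (ta A B u w)" using u w nu ta_assoc by simp
  also have "\<dots> = tn A B u" using e nu by simp
  finally show ?thesis .
qed
lemma ta_neg[simp]: "u \<in> H A B \<Longrightarrow> ta A B u (tn A B u) = dZero D A B"
  by (simp add: ta_def tn_def add_neg)
lemma ta_neg2[simp]: "u \<in> H A B \<Longrightarrow> ta A B (tn A B u) u = dZero D A B"
  using ta_comm ta_neg tn_hom by metis
lemma ta_neg3[simp]: "u \<in> H A B \<Longrightarrow> r \<in> H A B \<Longrightarrow> ta A B u (ta A B (tn A B u) r) = r"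
  by (metis ta_assoc ta_neg ta_zero2 tn_hom)
lemma ta_neg4[simp]: "u \<in> H A B \<Longrightarrow> r \<in> H A B \<Longrightarrow> ta A B (tn A B u) (ta A B u r) = r"
  by (metis ta_assoc ta_neg2 ta_zero2 tn_hom)
lemma tn_zero[simp]: "tn A B (dZero D A B) = dZero D A B"
proof -
  have "dZero D A B = tn A B (dZero D A B)" by (rule neg_unique) simp_all
  then show ?thesis by (rule sym)
qed
lemma tn_tn[simp]: "u \<in> H A B \<Longrightarrow> tn A B (tn A B u) = u"
proof -
  assume u: "u \<in> H A B"
  have "u = tn A B (tn A B u)" by (rule neg_unique) (simp_all add: u)
  then show ?thesis by (rule sym)
qed
lemma tc_negl[simp]: "f \<in> H A B \<Longrightarrow> g \<in> H B C \<Longrightarrow> tc A B C (tn B C g) f = tn A C (tc A B C g f)"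
proof -
  assume f: "f \<in> H A B" and g: "g \<in> H B C"
  have "ta A C (tc A B C g f) (tc A B C (tn B C g) f) = tc A B C (ta B C g (tn B C g)) f"
    by (rule tc_addr[symmetric]) (simp_all add: f g)
  also have "\<dots> = dZero D A C" using f g by simp
  finally show ?thesis by (intro neg_unique) (simp_all add: f g)
qed
lemma tc_negr[simp]: "f \<in> H A B \<Longrightarrow> g \<in> H B C \<Longrightarrow> tc A B C g (tn A B f) = tn A C (tc A B C g f)"
proof -
  assume f: "f \<in> H A B" and g: "g \<in> H B C"
  have "ta A C (tc A B C g f) (tc A B C g (tn A B f)) = tc A B C g (ta A B f (tn A B f))"
    by (rule tc_addl[symmetric]) (simp_all add: f g)
  also have "\<dots> = dZero D A C" using f g by simp
  finally show ?thesis by (intro neg_unique) (simp_all add: f g)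
qed
lemma tdg_neg[simp]: "f \<in> H A B \<Longrightarrow> tdg A B (tn A B f) = tn B A (tdg A B f)"
proof -
  assume f: "f \<in> H A B"
  have "ta B A (tdg A B f) (tdg A B (tn A B f)) = tdg A B (ta A B f (tn A B f))"
    by (rule tdg_ta[symmetric]) (simp_all add: f)
  also have "\<dots> = dZero D B A" using f by simp
  finally show ?thesis by (intro neg_unique) (simp_all add: f)
qed
lemma tn_ta[simp]: "f \<in> H A B \<Longrightarrow> g \<in> H A B \<Longrightarrow> tn A B (ta A B f g) = ta A B (tn A B f) (tn A B g)"
proof -
  assume f: "f \<in> H A B" and g: "g \<in> H A B"
  have "ta A B (ta A B f g) (ta A B (tn A B f) (tn A B g)) = ta A B f (ta A B g (ta A B (tn A B f) (tn A B g)))"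
    using f g by (simp add: ta_assoc)
  also have "\<dots> = ta A B f (ta A B (tn A B f) (ta A B g (tn A B g)))"
    using f g by (metis ta_lcomm tn_hom)
  also have "\<dots> = dZero D A B" using f g by simp
  finally have "ta A B (ta A B f g) (ta A B (tn A B f) (tn A B g)) = dZero D A B" .
  then show ?thesis by (intro neg_unique[symmetric]) (simp_all add: f g)
qed

lemma GL: assumes u: "u \<in> H C Y" and v: "v \<in> H C Y"
  and h1: "tc C Y C (tdg C Y v) v = tc C Y C (tdg C Y u) v"
  and h2: "tc C Y C (tdg C Y v) u = tc C Y C (tdg C Y u) v"
  shows "ta C C (tc C Y C (tdg C Y (ta C Y u (tn C Y v))) (ta C Y u (tn C Y v))) (tc C Y C (tdg C Y u) v)
     = tc C Y C (tdg C Y u) u"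
  using u v by (simp add: h1 h2 ta_assoc)

end

context dagger_additive_category begin

definition "symf A B = ta (Bp A B) (Bp B A) (tc (Bp A B) A (Bp B A) (dI2 D B A) (dP1 D A B))
    (tc (Bp A B) B (Bp B A) (dI1 D B A) (dP2 D A B))"
lemma symf_hom[simp]: "symf A B \<in> H (Bp A B) (Bp B A)" by (simp add: symf_def)

definition "cpf A = ta A (Bp A A) (tc A A (Bp A A) (dI1 D A A) (dId D A)) (tc A A (Bp A A) (dI2 D A A) (dId D A))"
lemma cpf_hom[simp]: "cpf A \<in> H A (Bp A A)" by (simp add: cpf_def)

lemma g_hom: "(A', B', f, p, x) \<in> mHom (gauss D X) A B \<longleftrightarrow> A' = A \<and> B' = B \<and> f \<in> H A B \<and> dag_positive D B p \<and> x \<in> H X B"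
  by (simp add: gauss_def)
lemma g_homE: "F \<in> mHom (gauss D X) A B \<Longrightarrow> (\<And>f p x. F = (A, B, f, p, x) \<Longrightarrow> f \<in> H A B \<Longrightarrow> dag_positive D B p \<Longrightarrow> x \<in> H X B \<Longrightarrow> P) \<Longrightarrow> P"
  by (cases F) (auto simp: gauss_def)
lemma g_cmp: "mCmp (gauss D X) (B', C, g, q, y) (A, B, f, p, x) =
   (A, C, tc A B C g f, ta C C q (tc C B C g (tc C B B p (tdg B C g))), ta X C y (tc X B C g x))"
  by (simp add: gauss_def tc_def ta_def tdg_def)
lemma g_id: "mId (gauss D X) A = (A, A, dId D A, dZero D A A, dZero D X A)"
  by (simp add: gauss_def)
lemma g_ten: "mTen (gauss D X) A B = Bp A B" by (simp add: gauss_def)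
lemma g_tenM: "mTenM (gauss D X) (A, B, f, p, x) (C, E, g, q, y) =
   (Bp A C, Bp B E, dsum D A C B E f g, dsum D B E B E p q, ta X (Bp B E) (tc X B (Bp B E) (dI1 D B E) x) (tc X E (Bp B E) (dI2 D B E) y))"
  by (simp add: gauss_def dpair_t)
lemma g_unit: "mUnit (gauss D X) = dZob D" by (simp add: gauss_def)
lemma g_assoc: "mAssoc (gauss D X) A B C = (Bp (Bp A B) C, Bp A (Bp B C), asf A B C,
   dZero D (Bp A (Bp B C)) (Bp A (Bp B C)), dZero D X (Bp A (Bp B C)))"
  by (simp add: gauss_def asf_def ta_def tc_def)
lemma g_lu: "mLu (gauss D X) A = (Bp (dZob D) A, A, dP2 D (dZob D) A, dZero D A A, dZero D X A)"
  by (simp add: gauss_def)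
lemma g_ru: "mRu (gauss D X) A = (Bp A (dZob D), A, dP1 D A (dZob D), dZero D A A, dZero D X A)"
  by (simp add: gauss_def)
lemma g_sym: "mSym (gauss D X) A B = (Bp A B, Bp B A, symf A B, dZero D (Bp B A) (Bp B A), dZero D X (Bp B A))"
  by (simp add: gauss_def symf_def ta_def tc_def)
lemma g_copy: "mCopy (gauss D X) A = (A, Bp A A, cpf A, dZero D (Bp A A) (Bp A A), dZero D X (Bp A A))"
  by (simp add: gauss_def cpf_def dpair_def ta_def tc_def)
lemma g_del: "mDel (gauss D X) A = (A, dZob D, dZero D A (dZob D), dZero D (dZob D) (dZob D), dZero D X (dZob D))"
  by (simp add: gauss_def)

lemmas gs = g_cmp g_id g_ten g_tenM g_unit g_assoc g_lu g_ru g_sym g_copy g_del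

lemma G_comp_hom: "F \<in> mHom (gauss D X) A B \<Longrightarrow> G \<in> mHom (gauss D X) B C \<Longrightarrow> mCmp (gauss D X) G F \<in> mHom (gauss D X) A C"
  apply (erule g_homE, erule g_homE)
  apply (simp add: g_cmp g_hom)
  by (metis pos_add pos_conj pos_hom)

lemma G_id_hom: "mId (gauss D X) A \<in> mHom (gauss D X) A A" by (simp add: g_id g_hom)

lemma G_idl: "F \<in> mHom (gauss D X) A B \<Longrightarrow> mCmp (gauss D X) (mId (gauss D X) B) F = F"
  by (erule g_homE) (simp add: gs pos_hom)
lemma G_idr: "F \<in> mHom (gauss D X) A B \<Longrightarrow> mCmp (gauss D X) F (mId (gauss D X) A) = F"
  by (erule g_homE) (simp add: gs pos_hom)
lemma G_assoc: "F \<in> mHom (gauss D X) A B \<Longrightarrow> G \<in> mHom (gauss D X) B C \<Longrightarrow> K \<in> mHom (gauss D X) C E \<Longrightarrow>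
   mCmp (gauss D X) K (mCmp (gauss D X) G F) = mCmp (gauss D X) (mCmp (gauss D X) K G) F"
  apply (erule g_homE, erule g_homE, erule g_homE)
  by (simp add: gs pos_hom ta_ac)


lemma tup_eqI: "teq A B f f' \<Longrightarrow> p = p' \<Longrightarrow> x = x' \<Longrightarrow> (A, B, f, p, x) = (A, B, f', p', x')"
  by (simp add: teq_def)
lemma tup_eqI2: "teq A B f f' \<Longrightarrow> teq B B p p' \<Longrightarrow> teq X B x x' \<Longrightarrow> (A, B, f, p, x) = (A, B, f', p', x')"
  by (simp add: teq_def)

definition "asi A B C = ta (Bp A (Bp B C)) (Bp (Bp A B) C)
   (tc (Bp A (Bp B C)) (Bp A B) (Bp (Bp A B) C) (dI1 D (Bp A B) C)
      (ta (Bp A (Bp B C)) (Bp A B) (tc (Bp A (Bp B C)) A (Bp A B) (dI1 D A B) (dP1 D A (Bp B C)))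
          (tc (Bp A (Bp B C)) B (Bp A B) (dI2 D A B) (tc (Bp A (Bp B C)) (Bp B C) B (dP1 D B C) (dP2 D A (Bp B C))))))
   (tc (Bp A (Bp B C)) C (Bp (Bp A B) C) (dI2 D (Bp A B) C) (tc (Bp A (Bp B C)) (Bp B C) C (dP2 D B C) (dP2 D A (Bp B C))))"
lemma asi_hom[simp]: "asi A B C \<in> H (Bp A (Bp B C)) (Bp (Bp A B) C)" by (simp add: asi_def)

lemma dsum_hom[simp]: "f \<in> H A B \<Longrightarrow> g \<in> H C E \<Longrightarrow> dsum D A C B E f g \<in> H (Bp A C) (Bp B E)"
  by simp

lemma G_tens_hom: "F \<in> mHom (gauss D X) A B \<Longrightarrow> G \<in> mHom (gauss D X) C E \<Longrightarrow>
    mTenM (gauss D X) F G \<in> mHom (gauss D X) (mTen (gauss D X) A C) (mTen (gauss D X) B E)"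
  apply (erule g_homE, erule g_homE)
  apply (simp only: g_tenM g_ten g_hom)
  apply (intro conjI refl pos_dsum; assumption?)
  apply (simp_all add: dsum_hom del: dsum_t)
  done

lemma G_tens_id: "mTenM (gauss D X) (mId (gauss D X) A) (mId (gauss D X) B) = mId (gauss D X) (mTen (gauss D X) A B)"
  apply (simp only: gs)
  apply (rule tup_eqI)
  apply (intro ext_cod ext_dom)
  apply (simp_all add: teq_def)
  done

lemma G_tens_comp: "F \<in> mHom (gauss D X) A B \<Longrightarrow> F' \<in> mHom (gauss D X) B C \<Longrightarrow> G \<in> mHom (gauss D X) A' B' \<Longrightarrow> G' \<in> mHom (gauss D X) B' C' \<Longrightarrow>
   mTenM (gauss D X) (mCmp (gauss D X) F' F) (mCmp (gauss D X) G' G) = mCmp (gauss D X) (mTenM (gauss D X) F' G') (mTenM (gauss D X) F G)"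
  apply (erule g_homE, erule g_homE, erule g_homE, erule g_homE)
  by (simp add: gs pos_hom ta_ac)

lemma G_assoc_iso: "m_is_iso (gauss D X) (mTen (gauss D X) (mTen (gauss D X) A B) C) (mTen (gauss D X) A (mTen (gauss D X) B C)) (mAssoc (gauss D X) A B C)"
  unfolding m_is_iso_def
  apply (rule conjI, simp add: gs g_hom)
  apply (rule bexI[of _ "(Bp A (Bp B C), Bp (Bp A B) C, asi A B C, dZero D (Bp (Bp A B) C) (Bp (Bp A B) C), dZero D X (Bp (Bp A B) C))"])
   apply (rule conjI)
    apply (simp only: gs, rule tup_eqI, intro ext_cod ext_dom, simp_all add: teq_def asf_def asi_def)
   apply (simp only: gs, rule tup_eqI, intro ext_cod ext_dom, simp_all add: teq_def asf_def asi_def)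
  apply (simp add: gs g_hom)
  done

end

context dagger_additive_category begin

lemma teq_zob1[intro]: "u \<in> H (dZob D) Q \<Longrightarrow> v \<in> H (dZob D) Q \<Longrightarrow> teq (dZob D) Q u v"
  using zero_obj_from by (auto simp: teq_def)
lemma teq_zob2[intro]: "u \<in> H P (dZob D) \<Longrightarrow> v \<in> H P (dZob D) \<Longrightarrow> teq P (dZob D) u v"
  using zero_obj_to by (auto simp: teq_def)

lemmas extI = teq_zob1 teq_zob2 ext_cod ext_dom

lemma G_inv_eq: "g \<in> mHom (gauss D X) B A \<Longrightarrow> f \<in> mHom (gauss D X) A B \<Longrightarrow> mCmp (gauss D X) g f = mId (gauss D X) A
   \<Longrightarrow> mCmp (gauss D X) f g = mId (gauss D X) B \<Longrightarrow> m_inv (gauss D X) A B f = g"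
  unfolding m_inv_def
proof (rule some_equality)
  assume a: "g \<in> mHom (gauss D X) B A" "f \<in> mHom (gauss D X) A B" "mCmp (gauss D X) g f = mId (gauss D X) A"
    "mCmp (gauss D X) f g = mId (gauss D X) B"
  then show "g \<in> mHom (gauss D X) B A \<and> mCmp (gauss D X) g f = mId (gauss D X) A \<and> mCmp (gauss D X) f g = mId (gauss D X) B" by simp
  fix g' assume b: "g' \<in> mHom (gauss D X) B A \<and> mCmp (gauss D X) g' f = mId (gauss D X) A \<and> mCmp (gauss D X) f g' = mId (gauss D X) B"
  have "g' = mCmp (gauss D X) g' (mId (gauss D X) B)" using b G_idr by metis
  also have "\<dots> = mCmp (gauss D X) g' (mCmp (gauss D X) f g)" using a by simp
  also have "\<dots> = mCmp (gauss D X) (mCmp (gauss D X) g' f) g" using a b G_assoc by metis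
  also have "\<dots> = g" using a b G_idl by metis
  finally show "g' = g" .
qed

lemma g_assoc_inv: "m_inv (gauss D X) (Bp (Bp A B) C) (Bp A (Bp B C)) (mAssoc (gauss D X) A B C)
  = (Bp A (Bp B C), Bp (Bp A B) C, asi A B C, dZero D (Bp (Bp A B) C) (Bp (Bp A B) C), dZero D X (Bp (Bp A B) C))"
  apply (rule G_inv_eq)
     apply (simp add: gs g_hom)
    apply (simp add: gs g_hom)
   apply (simp only: gs, rule tup_eqI, (intro extI)?, simp_all add: teq_def asf_def asi_def)
  apply (simp only: gs, rule tup_eqI, (intro extI)?, simp_all add: teq_def asf_def asi_def)
  done

lemma G_assoc_nat: "F \<in> mHom (gauss D X) A A' \<Longrightarrow> G \<in> mHom (gauss D X) B B' \<Longrightarrow> K \<in> mHom (gauss D X) C C' \<Longrightarrow>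
   mCmp (gauss D X) (mAssoc (gauss D X) A' B' C') (mTenM (gauss D X) (mTenM (gauss D X) F G) K)
     = mCmp (gauss D X) (mTenM (gauss D X) F (mTenM (gauss D X) G K)) (mAssoc (gauss D X) A B C)"
  apply (erule g_homE, erule g_homE, erule g_homE)
  apply (simp only: gs)
  apply (rule tup_eqI2[where X=X])
    apply ((intro extI)?, simp_all add: teq_def asf_def pos_hom ta_ac)
  done

lemma G_lu_nat: "F \<in> mHom (gauss D X) A B \<Longrightarrow> mCmp (gauss D X) F (mLu (gauss D X) A)
   = mCmp (gauss D X) (mLu (gauss D X) B) (mTenM (gauss D X) (mId (gauss D X) (mUnit (gauss D X))) F)"
  apply (erule g_homE)
  apply (simp only: gs)
  apply (rule tup_eqI2[where X=X])
    apply ((intro extI)?, simp_all add: teq_def pos_hom ta_ac)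
  done

lemma G_ru_nat: "F \<in> mHom (gauss D X) A B \<Longrightarrow> mCmp (gauss D X) F (mRu (gauss D X) A)
   = mCmp (gauss D X) (mRu (gauss D X) B) (mTenM (gauss D X) F (mId (gauss D X) (mUnit (gauss D X))))"
  apply (erule g_homE)
  apply (simp only: gs)
  apply (rule tup_eqI2[where X=X])
    apply ((intro extI)?, simp_all add: teq_def pos_hom ta_ac)
  done


lemma g_lu_inv: "m_inv (gauss D X) (Bp (dZob D) A) A (mLu (gauss D X) A)
  = (A, Bp (dZob D) A, dI2 D (dZob D) A, dZero D (Bp (dZob D) A) (Bp (dZob D) A), dZero D X (Bp (dZob D) A))"
  apply (rule G_inv_eq)
     apply (simp add: gs g_hom)
    apply (simp add: gs g_hom)
   apply (simp only: gs, rule tup_eqI, (intro extI)?, simp_all add: teq_def)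
  apply (simp only: gs, rule tup_eqI, (intro extI)?, simp_all add: teq_def)
  done

lemma G_lu_iso: "m_is_iso (gauss D X) (mTen (gauss D X) (mUnit (gauss D X)) A) A (mLu (gauss D X) A)"
  unfolding m_is_iso_def
  apply (rule conjI, simp add: gs g_hom)
  apply (rule bexI[of _ "(A, Bp (dZob D) A, dI2 D (dZob D) A, dZero D (Bp (dZob D) A) (Bp (dZob D) A), dZero D X (Bp (dZob D) A))"])
   apply (rule conjI)
    apply (simp only: gs, rule tup_eqI, (intro extI)?, simp_all add: teq_def)
   apply (simp only: gs, rule tup_eqI, (intro extI)?, simp_all add: teq_def)
  apply (simp add: gs g_hom)
  done

lemma G_ru_iso: "m_is_iso (gauss D X) (mTen (gauss D X) A (mUnit (gauss D X))) A (mRu (gauss D X) A)"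
  unfolding m_is_iso_def
  apply (rule conjI, simp add: gs g_hom)
  apply (rule bexI[of _ "(A, Bp A (dZob D), dI1 D A (dZob D), dZero D (Bp A (dZob D)) (Bp A (dZob D)), dZero D X (Bp A (dZob D)))"])
   apply (rule conjI)
    apply (simp only: gs, rule tup_eqI, (intro extI)?, simp_all add: teq_def)
   apply (simp only: gs, rule tup_eqI, (intro extI)?, simp_all add: teq_def)
  apply (simp add: gs g_hom)
  done

end

context dagger_additive_category begin


abbreviation "GG X \<equiv> gauss D X"

lemma G_pentagon: "mCmp (GG X) (mAssoc (GG X) A B (mTen (GG X) C E)) (mAssoc (GG X) (mTen (GG X) A B) C E)
         = mCmp (GG X) (mTenM (GG X) (mId (GG X) A) (mAssoc (GG X) B C E))
             (mCmp (GG X) (mAssoc (GG X) A (mTen (GG X) B C) E) (mTenM (GG X) (mAssoc (GG X) A B C) (mId (GG X) E)))"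
  by (simp only: gs, rule tup_eqI, (intro extI)?, simp_all add: teq_def asf_def asi_def symf_def cpf_def)
lemma G_triangle: "mCmp (GG X) (mTenM (GG X) (mId (GG X) A) (mLu (GG X) B)) (mAssoc (GG X) A (mUnit (GG X)) B)
                     = mTenM (GG X) (mRu (GG X) A) (mId (GG X) B)"
  by (simp only: gs, rule tup_eqI, (intro extI)?, simp_all add: teq_def asf_def asi_def symf_def cpf_def)
lemma G_sym_hom: "mSym (GG X) A B \<in> mHom (GG X) (mTen (GG X) A B) (mTen (GG X) B A)"
  by (simp add: gs g_hom)
lemma G_sym_nat: "F \<in> mHom (GG X) A A' \<Longrightarrow> G \<in> mHom (GG X) B B' \<Longrightarrow>
      mCmp (GG X) (mSym (GG X) A' B') (mTenM (GG X) F G) = mCmp (GG X) (mTenM (GG X) G F) (mSym (GG X) A B)"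
  apply (erule g_homE, erule g_homE)
  apply (simp only: gs)
  apply (rule tup_eqI2[where X=X])
    apply ((intro extI)?, simp_all add: teq_def symf_def pos_hom ta_ac)
  done
lemma G_sym_sym: "mCmp (GG X) (mSym (GG X) B A) (mSym (GG X) A B) = mId (GG X) (mTen (GG X) A B)"
  by (simp only: gs, rule tup_eqI, (intro extI)?, simp_all add: teq_def asf_def asi_def symf_def cpf_def)
lemma G_hexagon: "mCmp (GG X) (mAssoc (GG X) B C A) (mCmp (GG X) (mSym (GG X) A (mTen (GG X) B C)) (mAssoc (GG X) A B C))
         = mCmp (GG X) (mTenM (GG X) (mId (GG X) B) (mSym (GG X) A C))
             (mCmp (GG X) (mAssoc (GG X) B A C) (mTenM (GG X) (mSym (GG X) A B) (mId (GG X) C)))"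
  by (simp only: gs, rule tup_eqI, (intro extI)?, simp_all add: teq_def asf_def asi_def symf_def cpf_def)
lemma G_copy_hom: "mCopy (GG X) A \<in> mHom (GG X) A (mTen (GG X) A A)"
  by (simp add: gs g_hom)
lemma G_del_hom: "mDel (GG X) A \<in> mHom (GG X) A (mUnit (GG X))"
  by (simp add: gs g_hom)
lemma G_counit_left: "mCmp (GG X) (mLu (GG X) A) (mCmp (GG X) (mTenM (GG X) (mDel (GG X) A) (mId (GG X) A)) (mCopy (GG X) A)) = mId (GG X) A"
  by (simp only: gs, rule tup_eqI, (intro extI)?, simp_all add: teq_def asf_def asi_def symf_def cpf_def)
lemma G_counit_right: "mCmp (GG X) (mRu (GG X) A) (mCmp (GG X) (mTenM (GG X) (mId (GG X) A) (mDel (GG X) A)) (mCopy (GG X) A)) = mId (GG X) A"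
  by (simp only: gs, rule tup_eqI, (intro extI)?, simp_all add: teq_def asf_def asi_def symf_def cpf_def)
lemma G_coassoc: "mCmp (GG X) (mAssoc (GG X) A A A) (mCmp (GG X) (mTenM (GG X) (mCopy (GG X) A) (mId (GG X) A)) (mCopy (GG X) A))
                    = mCmp (GG X) (mTenM (GG X) (mId (GG X) A) (mCopy (GG X) A)) (mCopy (GG X) A)"
  by (simp only: gs, rule tup_eqI, (intro extI)?, simp_all add: teq_def asf_def asi_def symf_def cpf_def)
lemma G_cocomm: "mCmp (GG X) (mSym (GG X) A A) (mCopy (GG X) A) = mCopy (GG X) A"
  by (simp only: gs, rule tup_eqI, (intro extI)?, simp_all add: teq_def asf_def asi_def symf_def cpf_def)
lemma G_copy_tensor: "mCopy (GG X) (mTen (GG X) A B) = mCmp (GG X) (m_mid (GG X) A B) (mTenM (GG X) (mCopy (GG X) A) (mCopy (GG X) B))"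
  unfolding m_mid_def
  apply (simp only: g_ten g_assoc_inv)
  by (simp only: gs, rule tup_eqI, (intro extI)?, simp_all add: teq_def asf_def asi_def symf_def cpf_def)
lemma G_del_tensor: "mDel (GG X) (mTen (GG X) A B) = mCmp (GG X) (mLu (GG X) (mUnit (GG X))) (mTenM (GG X) (mDel (GG X) A) (mDel (GG X) B))"
  by (simp only: gs, rule tup_eqI, (intro extI)?, simp_all add: teq_def asf_def asi_def symf_def cpf_def)
lemma G_copy_unit: "mCopy (GG X) (mUnit (GG X)) = m_inv (GG X) (mTen (GG X) (mUnit (GG X)) (mUnit (GG X))) (mUnit (GG X)) (mLu (GG X) (mUnit (GG X)))"
  apply (simp only: g_ten g_unit g_lu_inv)
  by (simp only: gs, rule tup_eqI, (intro extI)?, simp_all add: teq_def asf_def asi_def symf_def cpf_def)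
lemma G_del_unit: "mDel (GG X) (mUnit (GG X)) = mId (GG X) (mUnit (GG X))"
  by (simp only: gs, rule tup_eqI, (intro extI)?, simp_all add: teq_def asf_def asi_def symf_def cpf_def)
lemma G_del_nat: "F \<in> mHom (GG X) A B \<Longrightarrow> mCmp (GG X) (mDel (GG X) B) F = mDel (GG X) A"
  apply (erule g_homE)
  apply (simp only: gs)
  apply (rule tup_eqI2[where X=X])
    apply ((intro extI)?, simp_all add: teq_def pos_hom)
  done

end

context dagger_additive_category begin

lemma cond_core: assumes "f \<in> H A (Bp B C)" "p \<in> H (Bp B C) (Bp B C)" "x \<in> H X (Bp B C)"
  "gB \<in> H B C" "gA \<in> H A C" "q \<in> H C C" "y \<in> H X C"
  and a: "ta A C gA (tc A B C gB (tc A (Bp B C) B (dP1 D B C) f)) = tc A (Bp B C) C (dP2 D B C) f"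
  and d: "tc C (Bp B C) B (dP1 D B C) (tc C (Bp B C) (Bp B C) p (tc C B (Bp B C) (dI1 D B C) (tdg B C gB))) =
        tc C (Bp B C) B (dP1 D B C) (tc C (Bp B C) (Bp B C) p (dI2 D B C))"
  and c: "tc B B C gB (tc B (Bp B C) B (dP1 D B C) (tc B (Bp B C) (Bp B C) p (dI1 D B C))) =
        tc B (Bp B C) C (dP2 D B C) (tc B (Bp B C) (Bp B C) p (dI1 D B C))"
  and e: "ta C C q (tc C B C gB (tc C (Bp B C) B (dP1 D B C) (tc C (Bp B C) (Bp B C) p (dI2 D B C)))) =
        tc C (Bp B C) C (dP2 D B C) (tc C (Bp B C) (Bp B C) p (dI2 D B C))"
  and b: "ta X C y (tc X B C gB (tc X (Bp B C) B (dP1 D B C) x)) = tc X (Bp B C) C (dP2 D B C) x"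
  shows "(let G = (Bp B A, C, ta (Bp B A) C (tc (Bp B A) B C gB (dP1 D B A)) (tc (Bp B A) A C gA (dP2 D B A)), q, y);
       F = (A, Bp B C, f, p, x); M = GG X in
   mCmp M (mTenM M (mId M B) G)
          (mCmp M (mAssoc M B B A)
          (mCmp M (mTenM M (mCopy M B) (mId M A))
          (mCmp M (mTenM M (mCmp M (mRu M B) (mTenM M (mId M B) (mDel M C))) (mId M A))
          (mCmp M (mTenM M F (mId M A)) (mCopy M A))))) = F)"
  using assms(1-7)
  apply (simp only: Let_def gs)
  apply (rule tup_eqI2[where X=X]; (intro extI)?)
  apply (simp_all add: teq_def asf_def cpf_def ta_ac a b c d e)
  done

end

context dagger_additive_category begin

lemma cond_facts:
  assumes fH: "f \<in> H A (Bp B C)" and xH: "x \<in> H X (Bp B C)"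
    and phi: "\<phi> \<in> H (Bp B C) Y" and pdef: "p = tc (Bp B C) Y (Bp B C) (tdg (Bp B C) Y \<phi>) \<phi>"
    and mp: "mp13_inverse D B Y (tc B (Bp B C) Y \<phi> (dI1 D B C)) h"
  shows "\<exists>gB gA q y. gB \<in> H B C \<and> gA \<in> H A C \<and> dag_positive D C q \<and> y \<in> H X C \<and>
    ta A C gA (tc A B C gB (tc A (Bp B C) B (dP1 D B C) f)) = tc A (Bp B C) C (dP2 D B C) f \<and>
    tc C (Bp B C) B (dP1 D B C) (tc C (Bp B C) (Bp B C) p (tc C B (Bp B C) (dI1 D B C) (tdg B C gB))) =
        tc C (Bp B C) B (dP1 D B C) (tc C (Bp B C) (Bp B C) p (dI2 D B C)) \<and>
    tc B B C gB (tc B (Bp B C) B (dP1 D B C) (tc B (Bp B C) (Bp B C) p (dI1 D B C))) =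
        tc B (Bp B C) C (dP2 D B C) (tc B (Bp B C) (Bp B C) p (dI1 D B C)) \<and>
    ta C C q (tc C B C gB (tc C (Bp B C) B (dP1 D B C) (tc C (Bp B C) (Bp B C) p (dI2 D B C)))) =
        tc C (Bp B C) C (dP2 D B C) (tc C (Bp B C) (Bp B C) p (dI2 D B C)) \<and>
    ta X C y (tc X B C gB (tc X (Bp B C) B (dP1 D B C) x)) = tc X (Bp B C) C (dP2 D B C) x"
proof -
  define \<phi>1 where "\<phi>1 = tc B (Bp B C) Y \<phi> (dI1 D B C)"
  define \<phi>2 where "\<phi>2 = tc C (Bp B C) Y \<phi> (dI2 D B C)"
  have p1H: "\<phi>1 \<in> H B Y" and p2H: "\<phi>2 \<in> H C Y" using phi by (simp_all add: \<phi>1_def \<phi>2_def)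
  have hH: "h \<in> H Y B" and M1raw: "dCmp D \<phi>1 (dCmp D h \<phi>1) = \<phi>1" and M3raw: "dDag D (dCmp D \<phi>1 h) = dCmp D \<phi>1 h"
    using mp by (simp_all add: mp13_inverse_def \<phi>1_def)
  have M1: "tc B B Y \<phi>1 (tc B Y B h \<phi>1) = \<phi>1" using M1raw by (simp add: tc_def)
  have M3: "tc Y B Y (tdg Y B h) (tdg B Y \<phi>1) = tc Y B Y \<phi>1 h"
  proof -
    have "tdg Y Y (tc Y B Y \<phi>1 h) = tc Y B Y \<phi>1 h" using M3raw by (simp add: tc_def tdg_def)
    then show ?thesis using p1H hH by simp
  qed
  have M1r: "tc Z B Y \<phi>1 (tc Z Y B h (tc Z B Y \<phi>1 R)) = tc Z B Y \<phi>1 R" if R: "R \<in> H Z B" for Z R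
  proof -
    have "tc Z B Y \<phi>1 R = tc Z B Y (tc B B Y \<phi>1 (tc B Y B h \<phi>1)) R" by (simp only: M1)
    also have "\<dots> = tc Z B Y \<phi>1 (tc Z Y B h (tc Z B Y \<phi>1 R))" using R p1H hH by simp
    finally show ?thesis by (rule sym)
  qed
  have M3r: "tc Z B Y (tdg Y B h) (tc Z Y B (tdg B Y \<phi>1) R) = tc Z B Y \<phi>1 (tc Z Y B h R)" if R: "R \<in> H Z Y" for Z R
  proof -
    have "tc Z Y Y (tc Y B Y (tdg Y B h) (tdg B Y \<phi>1)) R = tc Z Y Y (tc Y B Y \<phi>1 h) R" by (simp only: M3)
    then show ?thesis using R p1H hH by simp
  qed
  have N2: "tc Y Y B (tdg B Y \<phi>1) (tc Y B Y \<phi>1 h) = tdg B Y \<phi>1"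
  proof -
    have "tdg B Y \<phi>1 = tdg B Y (tc B B Y \<phi>1 (tc B Y B h \<phi>1))" by (simp only: M1)
    also have "\<dots> = tc Y Y B (tdg B Y \<phi>1) (tc Y B Y \<phi>1 h)" using p1H hH by (simp add: M3r M3)
    finally show ?thesis by (rule sym)
  qed
  have N2r: "tc Z Y B (tdg B Y \<phi>1) (tc Z B Y \<phi>1 (tc Z Y B h R)) = tc Z Y B (tdg B Y \<phi>1) R" if R: "R \<in> H Z Y" for Z R
  proof -
    have "tc Z Y B (tdg B Y \<phi>1) R = tc Z Y B (tc Y Y B (tdg B Y \<phi>1) (tc Y B Y \<phi>1 h)) R" by (simp only: N2)
    also have "\<dots> = tc Z Y B (tdg B Y \<phi>1) (tc Z B Y \<phi>1 (tc Z Y B h R))" using R p1H hH by simp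
    finally show ?thesis by (rule sym)
  qed
  have P11r: "tc Z (Bp B C) B (dP1 D B C) (tc Z (Bp B C) (Bp B C) p (tc Z B (Bp B C) (dI1 D B C) R))
     = tc Z Y B (tdg B Y \<phi>1) (tc Z B Y \<phi>1 R)" if R: "R \<in> H Z B" for Z R
    using R phi by (simp add: pdef \<phi>1_def)
  have P12r: "tc Z (Bp B C) B (dP1 D B C) (tc Z (Bp B C) (Bp B C) p (tc Z C (Bp B C) (dI2 D B C) R))
     = tc Z Y B (tdg B Y \<phi>1) (tc Z C Y \<phi>2 R)" if R: "R \<in> H Z C" for Z R
    using R phi by (simp add: pdef \<phi>1_def \<phi>2_def)
  have P21r: "tc Z (Bp B C) C (dP2 D B C) (tc Z (Bp B C) (Bp B C) p (tc Z B (Bp B C) (dI1 D B C) R))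
     = tc Z Y C (tdg C Y \<phi>2) (tc Z B Y \<phi>1 R)" if R: "R \<in> H Z B" for Z R
    using R phi by (simp add: pdef \<phi>1_def \<phi>2_def)
  have P22r: "tc Z (Bp B C) C (dP2 D B C) (tc Z (Bp B C) (Bp B C) p (tc Z C (Bp B C) (dI2 D B C) R))
     = tc Z Y C (tdg C Y \<phi>2) (tc Z C Y \<phi>2 R)" if R: "R \<in> H Z C" for Z R
    using R phi by (simp add: pdef \<phi>1_def \<phi>2_def)
  have P11: "tc B (Bp B C) B (dP1 D B C) (tc B (Bp B C) (Bp B C) p (dI1 D B C)) = tc B Y B (tdg B Y \<phi>1) \<phi>1"
    using P11r[of "dId D B" B] p1H by simp
  have P12: "tc C (Bp B C) B (dP1 D B C) (tc C (Bp B C) (Bp B C) p (dI2 D B C)) = tc C Y B (tdg B Y \<phi>1) \<phi>2"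
    using P12r[of "dId D C" C] p1H p2H by simp
  have P21: "tc B (Bp B C) C (dP2 D B C) (tc B (Bp B C) (Bp B C) p (dI1 D B C)) = tc B Y C (tdg C Y \<phi>2) \<phi>1"
    using P21r[of "dId D B" B] p1H p2H by simp
  have P22: "tc C (Bp B C) C (dP2 D B C) (tc C (Bp B C) (Bp B C) p (dI2 D B C)) = tc C Y C (tdg C Y \<phi>2) \<phi>2"
    using P22r[of "dId D C" C] p1H p2H by simp
  define gB where "gB = tc B Y C (tdg C Y \<phi>2) (tdg Y B h)"
  have gBH: "gB \<in> H B C" using p2H hH by (simp add: gB_def)
  define gA where "gA = ta A C (tc A (Bp B C) C (dP2 D B C) f) (tn A C (tc A B C gB (tc A (Bp B C) B (dP1 D B C) f)))"
  define y where "y = ta X C (tc X (Bp B C) C (dP2 D B C) x) (tn X C (tc X B C gB (tc X (Bp B C) B (dP1 D B C) x)))"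
  define K where "K = tc C B Y \<phi>1 (tc C Y B h \<phi>2)"
  have KH: "K \<in> H C Y" using p1H p2H hH by (simp add: K_def)
  define \<psi> where "\<psi> = ta C Y \<phi>2 (tn C Y K)"
  define q where "q = tc C Y C (tdg C Y \<psi>) \<psi>"
  have psiH: "\<psi> \<in> H C Y" using p2H KH by (simp add: \<psi>_def)
  have qpos: "dag_positive D C q" unfolding pos_iff q_def using psiH by auto
  have gAH: "gA \<in> H A C" using fH gBH by (simp add: gA_def)
  have yH: "y \<in> H X C" using xH gBH by (simp add: y_def)
  have a: "ta A C gA (tc A B C gB (tc A (Bp B C) B (dP1 D B C) f)) = tc A (Bp B C) C (dP2 D B C) f"
    unfolding gA_def using fH gBH by (simp add: ta_assoc)
  have b: "ta X C y (tc X B C gB (tc X (Bp B C) B (dP1 D B C) x)) = tc X (Bp B C) C (dP2 D B C) x"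
    unfolding y_def using xH gBH by (simp add: ta_assoc)
  have c: "tc B B C gB (tc B (Bp B C) B (dP1 D B C) (tc B (Bp B C) (Bp B C) p (dI1 D B C))) =
        tc B (Bp B C) C (dP2 D B C) (tc B (Bp B C) (Bp B C) p (dI1 D B C))"
    unfolding P11 P21 gB_def using p1H p2H hH by (simp add: M3r M1)
  have d: "tc C (Bp B C) B (dP1 D B C) (tc C (Bp B C) (Bp B C) p (tc C B (Bp B C) (dI1 D B C) (tdg B C gB))) =
        tc C (Bp B C) B (dP1 D B C) (tc C (Bp B C) (Bp B C) p (dI2 D B C))"
    unfolding P12 gB_def using p1H p2H hH by (simp add: P11r N2r)
  have T: "tc C B C gB (tc C (Bp B C) B (dP1 D B C) (tc C (Bp B C) (Bp B C) p (dI2 D B C))) = tc C Y C (tdg C Y \<phi>2) K"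
    unfolding P12 gB_def K_def using p1H p2H hH by (simp add: M3r)
  have h1: "tc C Y C (tdg C Y K) K = tc C Y C (tdg C Y \<phi>2) K"
    unfolding K_def using p1H p2H hH by (simp add: M3r M1r N2r)
  have h2: "tc C Y C (tdg C Y K) \<phi>2 = tc C Y C (tdg C Y \<phi>2) K"
    unfolding K_def using p1H p2H hH by (simp add: M3r)
  have e: "ta C C q (tc C B C gB (tc C (Bp B C) B (dP1 D B C) (tc C (Bp B C) (Bp B C) p (dI2 D B C)))) =
        tc C (Bp B C) C (dP2 D B C) (tc C (Bp B C) (Bp B C) p (dI2 D B C))"
    unfolding T P22 q_def \<psi>_def using GL[OF p2H KH h1 h2] .
  show ?thesis using gBH gAH qpos yH a b c d e by blast
qed

end

context dagger_additive_category begin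

lemma G_markov: "markov_category (gauss D X)"
  apply unfold_locales
  apply (fact G_comp_hom, fact G_id_hom, fact G_idl, fact G_idr, fact G_assoc, fact G_tens_hom,
     rule G_tens_id, fact G_tens_comp, rule G_assoc_iso, fact G_assoc_nat, rule G_lu_iso, fact G_lu_nat,
     rule G_ru_iso, fact G_ru_nat, rule G_pentagon, rule G_triangle, rule G_sym_hom, fact G_sym_nat,
     rule G_sym_sym, rule G_hexagon, rule G_copy_hom, rule G_del_hom, rule G_counit_left, rule G_counit_right,
     rule G_coassoc, rule G_cocomm, rule G_copy_tensor, rule G_del_tensor, rule G_copy_unit, rule G_del_unit,
     fact G_del_nat)+
  done

lemma G_cond:
  assumes MP: "\<forall>A B f. f \<in> dHom D A B \<longrightarrow> (\<exists>g. mp13_inverse D A B f g)"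
  shows "has_conditionals (gauss D X)"
  unfolding has_conditionals_def
proof (intro allI impI)
  fix A B C F
  assume FH: "F \<in> mHom (gauss D X) A (mTen (gauss D X) B C)"
  then have FH': "F \<in> mHom (gauss D X) A (Bp B C)" by (simp add: g_ten)
  obtain f p x where Fe: "F = (A, Bp B C, f, p, x)" and fH: "f \<in> H A (Bp B C)" and pp: "dag_positive D (Bp B C) p"
     and xH: "x \<in> H X (Bp B C)" using g_homE[OF FH'] by metis
  obtain Y \<phi> where phi: "\<phi> \<in> H (Bp B C) Y" and pdef: "p = tc (Bp B C) Y (Bp B C) (tdg (Bp B C) Y \<phi>) \<phi>"
    using pp unfolding pos_iff by blast
  have "tc B (Bp B C) Y \<phi> (dI1 D B C) \<in> H B Y" using phi by simp
  then obtain h where mp: "mp13_inverse D B Y (tc B (Bp B C) Y \<phi> (dI1 D B C)) h" using MP by blast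
  obtain gB gA q y where gBH: "gB \<in> H B C" and gAH: "gA \<in> H A C" and qp: "dag_positive D C q" and yH: "y \<in> H X C"
    and a: "ta A C gA (tc A B C gB (tc A (Bp B C) B (dP1 D B C) f)) = tc A (Bp B C) C (dP2 D B C) f"
    and d: "tc C (Bp B C) B (dP1 D B C) (tc C (Bp B C) (Bp B C) p (tc C B (Bp B C) (dI1 D B C) (tdg B C gB))) =
        tc C (Bp B C) B (dP1 D B C) (tc C (Bp B C) (Bp B C) p (dI2 D B C))"
    and c: "tc B B C gB (tc B (Bp B C) B (dP1 D B C) (tc B (Bp B C) (Bp B C) p (dI1 D B C))) =
        tc B (Bp B C) C (dP2 D B C) (tc B (Bp B C) (Bp B C) p (dI1 D B C))"
    and e: "ta C C q (tc C B C gB (tc C (Bp B C) B (dP1 D B C) (tc C (Bp B C) (Bp B C) p (dI2 D B C)))) =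
        tc C (Bp B C) C (dP2 D B C) (tc C (Bp B C) (Bp B C) p (dI2 D B C))"
    and b: "ta X C y (tc X B C gB (tc X (Bp B C) B (dP1 D B C) x)) = tc X (Bp B C) C (dP2 D B C) x"
    using cond_facts[OF fH xH phi pdef mp] by blast
  define G where "G = (Bp B A, C, ta (Bp B A) C (tc (Bp B A) B C gB (dP1 D B A)) (tc (Bp B A) A C gA (dP2 D B A)), q, y)"
  have GH: "G \<in> mHom (gauss D X) (mTen (gauss D X) B A) C"
    unfolding G_def g_ten g_hom using gBH gAH qp yH by simp
  have core: "(let G = (Bp B A, C, ta (Bp B A) C (tc (Bp B A) B C gB (dP1 D B A)) (tc (Bp B A) A C gA (dP2 D B A)), q, y);
       F = (A, Bp B C, f, p, x); M = GG X in
   mCmp M (mTenM M (mId M B) G)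
          (mCmp M (mAssoc M B B A)
          (mCmp M (mTenM M (mCopy M B) (mId M A))
          (mCmp M (mTenM M (mCmp M (mRu M B) (mTenM M (mId M B) (mDel M C))) (mId M A))
          (mCmp M (mTenM M F (mId M A)) (mCopy M A))))) = F)"
    by (rule cond_core[OF fH pos_hom[OF pp] xH gBH gAH pos_hom[OF qp] yH a d c e b])
  show "\<exists>G\<in>mHom (gauss D X) (mTen (gauss D X) B A) C.
            mCmp (gauss D X) (mTenM (gauss D X) (mId (gauss D X) B) G)
             (mCmp (gauss D X) (mAssoc (gauss D X) B B A)
               (mCmp (gauss D X) (mTenM (gauss D X) (mCopy (gauss D X) B) (mId (gauss D X) A))
                 (mCmp (gauss D X)
                   (mTenM (gauss D X)
                     (mCmp (gauss D X) (mRu (gauss D X) B) (mTenM (gauss D X) (mId (gauss D X) B) (mDel (gauss D X) C)))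
                     (mId (gauss D X) A))
                   (mCmp (gauss D X) (mTenM (gauss D X) F (mId (gauss D X) A)) (mCopy (gauss D X) A))))) =
            F"
  proof (rule bexI[OF _ GH])
    show "mCmp (gauss D X) (mTenM (gauss D X) (mId (gauss D X) B) G)
             (mCmp (gauss D X) (mAssoc (gauss D X) B B A)
               (mCmp (gauss D X) (mTenM (gauss D X) (mCopy (gauss D X) B) (mId (gauss D X) A))
                 (mCmp (gauss D X)
                   (mTenM (gauss D X)
                     (mCmp (gauss D X) (mRu (gauss D X) B) (mTenM (gauss D X) (mId (gauss D X) B) (mDel (gauss D X) C)))
                     (mId (gauss D X) A))
                   (mCmp (gauss D X) (mTenM (gauss D X) F (mId (gauss D X) A)) (mCopy (gauss D X) A))))) =
            F" using core unfolding Let_def G_def Fe .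
  qed
qed

end

theorem mainTheorem13:
  fixes D :: "('o,'m) dac" and X :: 'o
  assumes "dagger_additive_category D"
    and "\<forall>A B f. f \<in> dHom D A B \<longrightarrow> (\<exists>g. mp13_inverse D A B f g)"
  shows "markov_category (gauss D X) \<and> has_conditionals (gauss D X)"
  using dagger_additive_category.G_markov[OF assms(1)] dagger_additive_category.G_cond[OF assms(1) assms(2)] by blast


end
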